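(* For $n\ge 3$, the path $P_n$ with $n$ vertices satisfies $\nu_*(P_n)\le 4n-5$.
   Context: For a finite simple graph $G=(V,E)$ with $\ell=|V|+|E|$, a construction sequence (c-sequence) is a bijection $x:\{1,\dots,\ell\}\to V\sqcup E$ such that every edge $e=uw$ satisfies $x^{-1}(e)>\max\{x^{-1}(u),x^{-1}(w)\}$. The cost of $x$ is $\nu(x)=\sum_{e=uw\in E}\big(2x^{-1}(e)-x^{-1}(u)-x^{-1}(w)\big)$, and $\nu_*(G)$ is the minimum of $\nu(x)$ over all c-sequences for $G$. $P_n$ is the path with vertex set $\{1,\dots,n\}$ and edges $\{j,j+1\}$, $1\le j\le n-1$. *)

theory Defs
  imports Main
begin

definition simple_graph :: "'a set \<Rightarrow> 'a set set \<Rightarrow> bool" where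
  "simple_graph V E \<longleftrightarrow> finite V \<and> (\<forall>e\<in>E. e \<subseteq> V \<and> card e = 2)"

definition graph_elems :: "'a set \<Rightarrow> 'a set set \<Rightarrow> ('a + 'a set) set" where
  "graph_elems V E = Inl ` V \<union> Inr ` E"

definition c_sequence :: "'a set \<Rightarrow> 'a set set \<Rightarrow> (nat \<Rightarrow> 'a + 'a set) \<Rightarrow> bool" where
  "c_sequence V E x \<longleftrightarrow>
     bij_betw x {1..card V + card E} (graph_elems V E) \<and>
     (\<forall>e\<in>E. \<forall>u\<in>e.
        inv_into {1..card V + card E} x (Inr e) > inv_into {1..card V + card E} x (Inl u))"

text \<open>Cost: sum over edges e = uw of 2 x^{-1}(e) - x^{-1}(u) - x^{-1}(w),
  written as sum over the endpoints of e (x^{-1}(e) - x^{-1}(u)).\<close>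

definition c_cost :: "'a set \<Rightarrow> 'a set set \<Rightarrow> (nat \<Rightarrow> 'a + 'a set) \<Rightarrow> int" where
  "c_cost V E x = (let p = inv_into {1..card V + card E} x in
     (\<Sum>e\<in>E. \<Sum>u\<in>e. int (p (Inr e)) - int (p (Inl u))))"

definition min_cost :: "'a set \<Rightarrow> 'a set set \<Rightarrow> int" where
  "min_cost V E = Min (c_cost V E ` {x. c_sequence V E x})"

definition path_V :: "nat \<Rightarrow> nat set" where
  "path_V n = {1..n}"

definition path_E :: "nat \<Rightarrow> nat set set" where
  "path_E n = {{j, j+1} | j. 1 \<le> j \<and> j + 1 \<le> n}"

end

theory Submission
  imports Defs
begin

definition xs9 :: "nat \<Rightarrow> nat + nat set" where
  "xs9 i = (if i = 1 then Inl 1 else if even i then Inl (i div 2 + 1) else Inr {i div 2, i div 2 + 1})"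

definition ps9 :: "nat + nat set \<Rightarrow> nat" where
  "ps9 y = (case y of Inl k \<Rightarrow> if k = 1 then 1 else 2*k-2 | Inr e \<Rightarrow> 2 * Min e + 1)"

lemma card_path_E: "card (path_E n) = n - 1"
proof -
  have "path_E n = (\<lambda>j. {j, j+1}) ` {1..n-1}"
    unfolding path_E_def
    by (auto intro!: image_eqI) (rule_tac x=xa in exI, simp)
  moreover have "inj_on (\<lambda>j::nat. {j, j+1}) {1..n-1}"
    by (auto simp: inj_on_def doubleton_eq_iff)
  ultimately show ?thesis by (simp add: card_image)
qed

lemma L_eq: "n \<ge> 1 \<Longrightarrow> card (path_V n) + card (path_E n) = 2*n - 1"
  by (simp add: card_path_E path_V_def)

lemma ps_edge: "ps9 (Inr {j, j+1}) = 2*j+1"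
  by (simp add: ps9_def)

lemma px9: "a \<in> {1..2*n-1} \<Longrightarrow> ps9 (xs9 a) = a"
  by (auto simp: xs9_def ps9_def elim!: evenE oddE)

lemma xp9:
  assumes "y \<in> graph_elems (path_V n) (path_E n)"
  shows "xs9 (ps9 y) = y"
proof -
  from assms consider k where "y = Inl k" "1 \<le> k" | j where "y = Inr {j, j+1}" "1 \<le> j"
    unfolding graph_elems_def path_V_def path_E_def by auto
  then show "xs9 (ps9 y) = y"
  proof cases
    case 1 then show ?thesis
      by (cases "k = 1") (auto simp: xs9_def ps9_def)
  next
    case 2
    have "xs9 (2*j+1) = Inr {j, j+1}" using 2 by (simp add: xs9_def)
    then show ?thesis using 2 by (simp only: ps_edge)
  qed
qed

lemma pA9: "n \<ge> 1 \<Longrightarrow> ps9 ` graph_elems (path_V n) (path_E n) \<subseteq> {1..2*n-1}"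
  by (auto simp: graph_elems_def path_V_def path_E_def ps9_def)

lemma xG9:
  assumes "n \<ge> 1"
  shows "xs9 ` {1..2*n-1} \<subseteq> graph_elems (path_V n) (path_E n)"
  proof
    fix y assume "y \<in> xs9 ` {1..2*n-1}"
    then obtain i where i: "i \<in> {1..2*n-1}" "y = xs9 i" by auto
    show "y \<in> graph_elems (path_V n) (path_E n)"
    proof (cases "i = 1 \<or> even i")
      case True
      then show ?thesis using i assms
        by (auto simp: xs9_def graph_elems_def path_V_def elim!: evenE)
    next
      case False
      then obtain j where j: "i = 2*j+1" "j \<ge> 1" by (metis oddE One_nat_def add_0 mult_0_right not_less_eq_eq le_0_eq le_add1 nat_le_linear)
      have "{j, j+1} \<in> path_E n" using j i unfolding path_E_def by auto
      then show ?thesis using i j by (auto simp: xs9_def graph_elems_def)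
    qed
  qed

lemma bij9:
  assumes "n \<ge> 1"
  shows "bij_betw xs9 {1..2*n-1} (graph_elems (path_V n) (path_E n))"
  by (rule bij_betw_byWitness[where f'=ps9]) (use px9 xp9 pA9 xG9 assms in auto)

lemma inv9:
  assumes "n \<ge> 1" "y \<in> graph_elems (path_V n) (path_E n)"
  shows "inv_into {1..card (path_V n) + card (path_E n)} xs9 y = ps9 y"
proof -
  have inj: "inj_on xs9 {1..2*n-1}" using bij9[OF assms(1)] by (simp add: bij_betw_def)
  have "ps9 y \<in> {1..2*n-1}" using pA9 assms by blast
  then have "inv_into {1..2*n-1} xs9 (xs9 (ps9 y)) = ps9 y" using inj by (simp add: inv_into_f_f)
  then show ?thesis using xp9[OF assms(2)] L_eq[OF assms(1)] by simp
qed

lemma cost_bound: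
  assumes fin: "finite E" and c2: "\<forall>e\<in>E. card e = 2" and sub: "\<forall>e\<in>E. e \<subseteq> V" and cs: "c_sequence V E x"
  shows "\<bar>c_cost V E x\<bar> \<le> int (card E * (2 * (card V + card E)))"
proof -
  let ?A = "{1..card V + card E}"
  let ?p = "inv_into ?A x"
  have bij: "bij_betw x ?A (graph_elems V E)" using cs by (simp add: c_sequence_def)
  have inA: "?p y \<in> ?A" if "y \<in> graph_elems V E" for y
    using that bij by (metis bij_betw_def inv_into_into)
  have trm: "\<bar>int (?p (Inr e)) - int (?p (Inl u))\<bar> \<le> int (card V + card E)"
    if "e \<in> E" "u \<in> e" for e u
  proof -
    have "Inr e \<in> graph_elems V E" using that by (simp add: graph_elems_def)
    moreover have "Inl u \<in> graph_elems V E"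
      using sub that unfolding graph_elems_def by auto
    ultimately have "?p (Inr e) \<in> ?A" "?p (Inl u) \<in> ?A" using inA by blast+
    then show ?thesis by auto
  qed
  have inner: "\<bar>\<Sum>u\<in>e. int (?p (Inr e)) - int (?p (Inl u))\<bar> \<le> int (2 * (card V + card E))"
    if "e \<in> E" for e
  proof -
    have "\<bar>\<Sum>u\<in>e. int (?p (Inr e)) - int (?p (Inl u))\<bar> \<le> (\<Sum>u\<in>e. \<bar>int (?p (Inr e)) - int (?p (Inl u))\<bar>)"
      by (rule sum_abs)
    also have "\<dots> \<le> (\<Sum>u\<in>e. int (card V + card E))"
      by (rule sum_mono) (use trm that in auto)
    also have "\<dots> = int (2 * (card V + card E))" using c2 that by simp
    finally show ?thesis .
  qed
  have "\<bar>c_cost V E x\<bar> \<le> (\<Sum>e\<in>E. \<bar>\<Sum>u\<in>e. int (?p (Inr e)) - int (?p (Inl u))\<bar>)"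
    unfolding c_cost_def Let_def by (rule sum_abs)
  also have "\<dots> \<le> (\<Sum>e\<in>E. int (2 * (card V + card E)))"
    by (rule sum_mono) (use inner in auto)
  also have "\<dots> = int (card E * (2 * (card V + card E)))" by simp
  finally show ?thesis .
qed

lemma cseq9:
  assumes "n \<ge> 1"
  shows "c_sequence (path_V n) (path_E n) xs9"
  unfolding c_sequence_def
proof
  show "bij_betw xs9 {1..card (path_V n) + card (path_E n)} (graph_elems (path_V n) (path_E n))"
    using bij9[OF assms] L_eq[OF assms] by simp
  show "\<forall>e\<in>path_E n. \<forall>u\<in>e. inv_into {1..card (path_V n) + card (path_E n)} xs9 (Inl u)
          < inv_into {1..card (path_V n) + card (path_E n)} xs9 (Inr e)"
  proof (intro ballI)
    fix e u assume e: "e \<in> path_E n" and u: "u \<in> e"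
    then obtain j where j: "e = {j, j+1}" "1 \<le> j" "j+1 \<le> n" unfolding path_E_def by auto
    have G1: "Inr e \<in> graph_elems (path_V n) (path_E n)" using e by (simp add: graph_elems_def)
    have G2: "Inl u \<in> graph_elems (path_V n) (path_E n)" using u j by (auto simp: graph_elems_def path_V_def)
    show "inv_into {1..card (path_V n) + card (path_E n)} xs9 (Inl u)
          < inv_into {1..card (path_V n) + card (path_E n)} xs9 (Inr e)"
      unfolding inv9[OF assms G1] inv9[OF assms G2] using j u ps_edge[of j]
      by (auto simp: ps9_def)
  qed
qed

lemma cost9:
  assumes "n \<ge> 2"
  shows "c_cost (path_V n) (path_E n) xs9 = 4 * int n - 5"
proof -
  have n1: "n \<ge> 1" using assms by simp
  have E: "path_E n = (\<lambda>j. {j, j+1}) ` {1..n-1}"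
    unfolding path_E_def
    by (auto intro!: image_eqI) (rule_tac x=xa in exI, simp)
  have inj: "inj_on (\<lambda>j::nat. {j, j+1}) {1..n-1}"
    by (auto simp: inj_on_def doubleton_eq_iff)
  let ?p = "inv_into {1..card (path_V n) + card (path_E n)} xs9"
  have inner: "(\<Sum>u\<in>{j, j+1}. int (?p (Inr {j, j+1})) - int (?p (Inl u))) = 4 - (if j = 1 then 1 else 0)"
    if j: "j \<in> {1..n-1}" for j
  proof -
    have G1: "Inr {j, j+1} \<in> graph_elems (path_V n) (path_E n)" using j E by (auto simp: graph_elems_def)
    have G2: "Inl j \<in> graph_elems (path_V n) (path_E n)" "Inl (j+1) \<in> graph_elems (path_V n) (path_E n)"
      using j by (auto simp: graph_elems_def path_V_def)
    have "(\<Sum>u\<in>{j, j+1}. int (?p (Inr {j, j+1})) - int (?p (Inl u)))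
        = (int (?p (Inr {j, j+1})) - int (?p (Inl j))) + (int (?p (Inr {j, j+1})) - int (?p (Inl (j+1))))"
      by simp
    also have "\<dots> = (int (ps9 (Inr {j, j+1})) - int (ps9 (Inl j))) + (int (ps9 (Inr {j, j+1})) - int (ps9 (Inl (j+1))))"
      by (simp only: inv9[OF n1 G1] inv9[OF n1 G2(1)] inv9[OF n1 G2(2)])
    also have "\<dots> = 4 - (if j = 1 then 1 else 0)"
      using j by (simp only: ps_edge) (auto simp: ps9_def)
    finally show ?thesis .
  qed
  have "c_cost (path_V n) (path_E n) xs9 = (\<Sum>e\<in>path_E n. \<Sum>u\<in>e. int (?p (Inr e)) - int (?p (Inl u)))"
    unfolding c_cost_def Let_def by simp
  also have "\<dots> = (\<Sum>j\<in>{1..n-1}. \<Sum>u\<in>{j, j+1}. int (?p (Inr {j, j+1})) - int (?p (Inl u)))"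
    unfolding E by (rule sum.reindex[OF inj, unfolded comp_def])
  also have "\<dots> = (\<Sum>j\<in>{1..n-1}. 4 - (if j = 1 then 1 else 0 :: int))"
    by (rule sum.cong) (use inner in auto)
  also have "\<dots> = (\<Sum>j\<in>{1..n-1}. 4 :: int) - (\<Sum>j\<in>{1..n-1}. (if j = 1 then 1 else 0 :: int))"
    by (rule sum_subtractf)
  also have "\<dots> = 4 * int n - 5"
    using assms by (simp add: of_nat_diff)
  finally show ?thesis .
qed

theorem theorem9:
  fixes n :: nat
  assumes "n \<ge> 3"
  shows "min_cost (path_V n) (path_E n) \<le> 4 * int n - 5"
proof -
  let ?V = "path_V n" and ?E = "path_E n"
  let ?K = "int (card ?E * (2 * (card ?V + card ?E)))"
  have finE: "finite ?E" unfolding path_E_def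
    by (rule finite_subset[of _ "Pow {1..n}"]) auto
  have c2: "\<forall>e\<in>?E. card e = 2" unfolding path_E_def by auto
  have sub: "\<forall>e\<in>?E. e \<subseteq> ?V" unfolding path_E_def path_V_def by auto
  have "c_cost ?V ?E ` {x. c_sequence ?V ?E x} \<subseteq> {-?K..?K}"
  proof
    fix c assume "c \<in> c_cost ?V ?E ` {x. c_sequence ?V ?E x}"
    then obtain x where "c_sequence ?V ?E x" "c = c_cost ?V ?E x" by auto
    then have "\<bar>c\<bar> \<le> ?K" using cost_bound[OF finE c2 sub] by blast
    then show "c \<in> {-?K..?K}" unfolding atLeastAtMost_iff by (smt (verit))
  qed
  then have fin: "finite (c_cost ?V ?E ` {x. c_sequence ?V ?E x})"
    by (rule finite_subset) simp
  have mem: "c_cost ?V ?E xs9 \<in> c_cost ?V ?E ` {x. c_sequence ?V ?E x}"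
    using cseq9[of n] assms by auto
  have "min_cost ?V ?E \<le> c_cost ?V ?E xs9"
    unfolding min_cost_def by (rule Min_le[OF fin mem])
  also have "\<dots> = 4 * int n - 5" using cost9[of n] assms by simp
  finally show ?thesis .
qed

end
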